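(* Let $G$ be a finitely generated virtually free group with finite inverse-closed generating set $X$, and let $H$ be a finitely generated subgroup of $G$. Then $\mathsf{GWP}(G,H,X)$ is a deterministic context-free language.
   Context: For a group $G$ with finite generating set $X$ (closed under inverses) and a subgroup $H \le G$, the generalised word problem $\mathsf{GWP}(G,H,X)$ is the set of words over $X$ that represent elements of $H$. A group is virtually free if it has a free subgroup of finite index. A language is deterministic context-free if it is accepted by a deterministic pushdown automaton. *)

theory Defs
  imports "HOL-Algebra.Algebra"
begin

definition word_eval :: "('g, 'b) monoid_scheme \<Rightarrow> 'g list \<Rightarrow> 'g" where
  "word_eval G w = foldr (\<lambda>x y. x \<otimes>\<^bsub>G\<^esub> y) w \<one>\<^bsub>G\<^esub>"

definition GWP :: "('g, 'b) monoid_scheme \<Rightarrow> 'g set \<Rightarrow> 'g set \<Rightarrow> 'g list set" where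
  "GWP G K Y = {w. set w \<subseteq> Y \<and> word_eval G w \<in> K}"

definition signed_eval :: "('g, 'b) monoid_scheme \<Rightarrow> ('g \<times> bool) list \<Rightarrow> 'g" where
  "signed_eval G w = foldr (\<lambda>(b, s) y. (if s then b else inv\<^bsub>G\<^esub> b) \<otimes>\<^bsub>G\<^esub> y) w \<one>\<^bsub>G\<^esub>"

definition freely_reduced :: "('g \<times> bool) list \<Rightarrow> bool" where
  "freely_reduced w = (\<forall>i. Suc i < length w \<longrightarrow>
      \<not> (fst (w ! i) = fst (w ! Suc i) \<and> snd (w ! i) \<noteq> snd (w ! Suc i)))"

definition free_basis :: "('g, 'b) monoid_scheme \<Rightarrow> 'g set \<Rightarrow> bool" where
  "free_basis G B = (B \<subseteq> carrier G \<and> generate G B = carrier G \<and>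
     (\<forall>w. w \<noteq> [] \<and> set (map fst w) \<subseteq> B \<and> freely_reduced w \<longrightarrow> signed_eval G w \<noteq> \<one>\<^bsub>G\<^esub>))"

definition free_group :: "('g, 'b) monoid_scheme \<Rightarrow> bool" where
  "free_group G = (group G \<and> (\<exists>B. free_basis G B))"

definition virtually_free :: "('g, 'b) monoid_scheme \<Rightarrow> bool" where
  "virtually_free G = (group G \<and> (\<exists>F. subgroup F G \<and> finite (rcosets\<^bsub>G\<^esub> F)
      \<and> free_group (G\<lparr>carrier := F\<rparr>)))"

definition fin_gen_subgroup :: "('g, 'b) monoid_scheme \<Rightarrow> 'g set \<Rightarrow> bool" where
  "fin_gen_subgroup G H = (subgroup H G \<and> (\<exists>S. finite S \<and> S \<subseteq> H \<and> generate G S = H))"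

record ('q, 'a, 's) dpda =
  states :: "'q set"
  sigma :: "'a set"
  stack_syms :: "'s set"
  init :: 'q
  init_stack :: 's
  final :: "'q set"
  delta :: "'q \<Rightarrow> 'a option \<Rightarrow> 's \<Rightarrow> ('q \<times> 's list) option"
    \<comment> \<open>None as input means an epsilon move; the result pushes a list (top first)
        replacing the popped top symbol\<close>

definition dpda_wf :: "('q, 'a, 's) dpda \<Rightarrow> bool" where
  "dpda_wf M = (finite (states M) \<and> finite (sigma M) \<and> finite (stack_syms M) \<and>
     init M \<in> states M \<and> init_stack M \<in> stack_syms M \<and> final M \<subseteq> states M \<and>
     (\<forall>q a Z p \<alpha>. delta M q a Z = Some (p, \<alpha>) \<longrightarrow>
        q \<in> states M \<and> Z \<in> stack_syms M \<and> (\<forall>x. a = Some x \<longrightarrow> x \<in> sigma M) \<and>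
        p \<in> states M \<and> set \<alpha> \<subseteq> stack_syms M) \<and>
     (\<forall>q Z. delta M q None Z \<noteq> None \<longrightarrow> (\<forall>a. delta M q (Some a) Z = None)))"

text \<open>One step on configurations (state, remaining input, stack with top first).\<close>
inductive dpda_step :: "('q, 'a, 's) dpda \<Rightarrow> ('q \<times> 'a list \<times> 's list) \<Rightarrow>
    ('q \<times> 'a list \<times> 's list) \<Rightarrow> bool" for M where
  read: "delta M q (Some a) Z = Some (p, \<alpha>) \<Longrightarrow>
     dpda_step M (q, a # w, Z # \<gamma>) (p, w, \<alpha> @ \<gamma>)"
| eps: "delta M q None Z = Some (p, \<alpha>) \<Longrightarrow>
     dpda_step M (q, w, Z # \<gamma>) (p, w, \<alpha> @ \<gamma>)"

definition dpda_lang :: "('q, 'a, 's) dpda \<Rightarrow> 'a list set" where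
  "dpda_lang M = {w. set w \<subseteq> sigma M \<and>
     (\<exists>p \<gamma>. (dpda_step M)\<^sup>*\<^sup>* (init M, w, [init_stack M]) (p, [], \<gamma>) \<and> p \<in> final M)}"

text \<open>A language over alphabet \<Sigma> is deterministic context-free if accepted by a DPDA
  (states and stack symbols can be taken to be natural numbers without loss of generality).\<close>
definition det_context_free :: "'a set \<Rightarrow> 'a list set \<Rightarrow> bool" where
  "det_context_free \<Sigma> L = (\<exists>M :: (nat, 'a, nat) dpda.
     dpda_wf M \<and> sigma M = \<Sigma> \<and> dpda_lang M = L)"

end

theory Submission
  imports Defs "HOL-Library.Sublist"
begin


definition iv :: "'g \<times> bool \<Rightarrow> 'g \<times> bool" where "iv y = (fst y, \<not> snd y)"

lemma iv_iv[simp]: "iv (iv y) = y" by (simp add: iv_def)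
lemma iv_neq[simp]: "iv y \<noteq> y" by (cases y) (simp add: iv_def)
lemma iv_inj[simp]: "iv x = iv y \<longleftrightarrow> x = y" by (metis iv_iv)
lemma fst_iv[simp]: "fst (iv y) = fst y" by (simp add: iv_def)

lemma fr_conv: "freely_reduced w = (\<forall>i. Suc i < length w \<longrightarrow> w ! Suc i \<noteq> iv (w ! i))"
  unfolding freely_reduced_def iv_def by (auto simp: prod_eq_iff)

lemma fr_Nil[simp]: "freely_reduced []" by (simp add: fr_conv)

lemma fr_snoc: "freely_reduced (a @ [y]) \<longleftrightarrow> freely_reduced a \<and> (a \<noteq> [] \<longrightarrow> y \<noteq> iv (last a))"
proof -
  have "(\<forall>i. Suc i < length (a @ [y]) \<longrightarrow> (a @ [y]) ! Suc i \<noteq> iv ((a @ [y]) ! i)) \<longleftrightarrow>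
    (\<forall>i. Suc i < length a \<longrightarrow> a ! Suc i \<noteq> iv (a ! i)) \<and> (a \<noteq> [] \<longrightarrow> y \<noteq> iv (a ! (length a - 1)))"
  proof (intro iffI conjI allI impI)
    fix i assume h: "\<forall>i. Suc i < length (a @ [y]) \<longrightarrow> (a @ [y]) ! Suc i \<noteq> iv ((a @ [y]) ! i)"
      and i: "Suc i < length a"
    from h[rule_format, of i] i show "a ! Suc i \<noteq> iv (a ! i)" by (simp add: nth_append)
  next
    assume h: "\<forall>i. Suc i < length (a @ [y]) \<longrightarrow> (a @ [y]) ! Suc i \<noteq> iv ((a @ [y]) ! i)"
      and a: "a \<noteq> []"
    from h[rule_format, of "length a - 1"] a show "y \<noteq> iv (a ! (length a - 1))" by (simp add: nth_append)
  next
    fix i assume h: "(\<forall>i. Suc i < length a \<longrightarrow> a ! Suc i \<noteq> iv (a ! i)) \<and> (a \<noteq> [] \<longrightarrow> y \<noteq> iv (a ! (length a - 1)))"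
      and i: "Suc i < length (a @ [y])"
    show "(a @ [y]) ! Suc i \<noteq> iv ((a @ [y]) ! i)"
    proof (cases "Suc i < length a")
      case True then show ?thesis using h by (simp add: nth_append)
    next
      case False then have "Suc i = length a" using i by simp
      then have ia: "i = length a - 1" "a \<noteq> []" by auto
      then show ?thesis using h by (simp add: nth_append)
    qed
  qed
  then show ?thesis by (simp add: fr_conv last_conv_nth)
qed

lemma fr_append: "freely_reduced (a @ b) \<longleftrightarrow> freely_reduced a \<and> freely_reduced b \<and>
   (a \<noteq> [] \<and> b \<noteq> [] \<longrightarrow> hd b \<noteq> iv (last a))"
proof (induction b rule: rev_induct)
  case Nil then show ?case by simp
next
  case (snoc y b)
  show ?case
  proof (cases "b = []")
    case True then show ?thesis using fr_snoc[of a y] fr_snoc[of "[]" y] by auto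
  next
    case False
    then show ?thesis using snoc fr_snoc[of "a @ b" y] fr_snoc[of b y]
      by (auto simp: hd_append)
  qed
qed

lemma fr_Cons: "freely_reduced (y # a) \<longleftrightarrow> freely_reduced a \<and> (a \<noteq> [] \<longrightarrow> hd a \<noteq> iv y)"
  using fr_append[of "[y]" a] fr_snoc[of "[]" y] by auto

definition invw :: "('g \<times> bool) list \<Rightarrow> ('g \<times> bool) list" where "invw b = rev (map iv b)"

lemma fr_invw: "freely_reduced b \<Longrightarrow> freely_reduced (invw b)"
proof (induction b rule: rev_induct)
  case Nil then show ?case by (simp add: invw_def)
next
  case (snoc y b)
  then show ?case using fr_snoc[of b y] fr_Cons[of "iv y" "invw b"]
    by (auto simp: invw_def hd_rev last_map)
qed

lemma fr_prefix: "freely_reduced b \<Longrightarrow> prefix a b \<Longrightarrow> freely_reduced a"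
  unfolding prefix_def using fr_append by blast

definition push :: "('g \<times> bool) list \<Rightarrow> 'g \<times> bool \<Rightarrow> ('g \<times> bool) list" where
  "push a y = (if a \<noteq> [] \<and> last a = iv y then butlast a else a @ [y])"

lemma push_can: "a \<noteq> [] \<and> last a = iv y \<Longrightarrow> push a y = butlast a"
  unfolding push_def by auto
lemma push_app: "\<not> (a \<noteq> [] \<and> last a = iv y) \<Longrightarrow> push a y = a @ [y]"
  unfolding push_def by auto

lemma fr_push: assumes "freely_reduced a" shows "freely_reduced (push a y)"
proof (cases "a \<noteq> [] \<and> last a = iv y")
  case True
  then have "a = butlast a @ [last a]" by (metis append_butlast_last_id)
  then have "freely_reduced (butlast a)" using assms fr_snoc by metis
  then show ?thesis using True push_can by metis
next
  case False
  then have "freely_reduced (a @ [y])" using assms fr_snoc[of a y] by auto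
  then show ?thesis using False push_app by metis
qed

lemma fr_foldl_push: "freely_reduced a \<Longrightarrow> freely_reduced (foldl push a b)"
  by (induction b arbitrary: a) (auto simp: fr_push)

lemma set_push: "set (push a y) \<subseteq> set a \<union> {y}"
  unfolding push_def by (auto dest: in_set_butlastD)

lemma set_foldl_push: "set (foldl push a b) \<subseteq> set a \<union> set b"
proof (induction b arbitrary: a)
  case (Cons y b)
  have "set (foldl push (push a y) b) \<subseteq> set (push a y) \<union> set b" by (rule Cons.IH)
  with set_push[of a y] show ?case by auto
qed simp

context group begin
lemma letters_foldl_push: assumes "fst ` set a \<subseteq> Lt" "fst ` set b \<subseteq> Lt"
  shows "fst ` set (foldl push a b) \<subseteq> Lt"
proof -
  have "fst ` set (foldl push a b) \<subseteq> fst ` (set a \<union> set b)" using set_foldl_push by (rule image_mono)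
  also have "\<dots> \<subseteq> Lt" using assms by (simp add: image_Un)
  finally show ?thesis .
qed



abbreviation ev where "ev \<equiv> signed_eval G"

lemma ev_Nil[simp]: "ev [] = \<one>" by (simp add: signed_eval_def)
lemma ev_Cons: "ev (y # w) = (if snd y then fst y else inv (fst y)) \<otimes> ev w"
  by (cases y) (simp add: signed_eval_def)

lemma ev_closed[simp]: "fst ` set w \<subseteq> carrier G \<Longrightarrow> ev w \<in> carrier G"
  by (induction w) (auto simp: ev_Cons)

lemma ev_append: "fst ` set a \<subseteq> carrier G \<Longrightarrow> fst ` set b \<subseteq> carrier G \<Longrightarrow> ev (a @ b) = ev a \<otimes> ev b"
  by (induction a) (auto simp: ev_Cons m_assoc)

lemma ev_single_iv: "fst y \<in> carrier G \<Longrightarrow> ev [y] \<otimes> ev [iv y] = \<one>"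
  by (cases y) (auto simp: ev_Cons iv_def)

lemma ev_iv: "fst y \<in> carrier G \<Longrightarrow> ev [iv y] = inv (ev [y])"
  by (cases y) (auto simp: ev_Cons iv_def)

lemma ev_invw: "fst ` set b \<subseteq> carrier G \<Longrightarrow> ev (invw b) = inv (ev b)"
proof (induction b)
  case (Cons y b)
  have ci: "fst ` set (invw b) \<subseteq> carrier G" using Cons.prems by (auto simp: invw_def)
  have "ev (invw (y # b)) = ev (invw b @ [iv y])" by (simp add: invw_def)
  also have "\<dots> = ev (invw b) \<otimes> ev [iv y]" using ci Cons.prems by (simp add: ev_append)
  also have "\<dots> = inv (ev b) \<otimes> inv (ev [y])" using Cons by (simp add: ev_iv)
  also have "\<dots> = inv (ev [y] \<otimes> ev b)" using Cons by (simp add: inv_mult_group)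
  also have "ev [y] \<otimes> ev b = ev (y # b)" using ev_append[of "[y]" b] Cons by simp
  finally show ?case .
qed (simp add: invw_def)

lemma ev_push: assumes c: "fst ` set a \<subseteq> carrier G" "fst y \<in> carrier G"
  shows "ev (push a y) = ev a \<otimes> ev [y]"
proof (cases "a \<noteq> [] \<and> last a = iv y")
  case True
  obtain a' where a: "a = a' @ [iv y]" using True by (metis append_butlast_last_id)
  have "ev a \<otimes> ev [y] = ev a' \<otimes> (ev [iv y] \<otimes> ev [y])" using a c
    by (simp add: ev_append m_assoc image_Un)
  also have "\<dots> = ev a'" using ev_single_iv[of "iv y"] c a by (simp add: image_Un)
  finally show ?thesis using True a push_can[of a y] by simp
next
  case False
  then have "push a y = a @ [y]" by (rule push_app)
  then show ?thesis using c by (simp add: ev_append)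
qed

lemma ev_foldl_push: "fst ` set a \<subseteq> carrier G \<Longrightarrow> fst ` set b \<subseteq> carrier G \<Longrightarrow>
   ev (foldl push a b) = ev a \<otimes> ev b"
proof (induction b arbitrary: a)
  case (Cons y b)
  have "fst ` set (push a y) \<subseteq> carrier G" using set_push[of a y] Cons.prems by auto
  then have "ev (foldl push a (y # b)) = ev (push a y) \<otimes> ev b" using Cons by simp
  also have "\<dots> = ev a \<otimes> ev (y # b)" using Cons.prems
    by (simp add: ev_push ev_append[of "[y]" b, simplified] m_assoc)
  finally show ?case .
qed simp

lemma prefix_foldl_push: "fst ` set a \<subseteq> carrier G \<Longrightarrow> fst ` set b \<subseteq> carrier G \<Longrightarrow>
  prefix p (foldl push a b) \<Longrightarrow> prefix p a \<or> (\<exists>b1. prefix b1 b \<and> ev p = ev a \<otimes> ev b1)"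
proof (induction b arbitrary: p rule: rev_induct)
  case Nil then show ?case by simp
next
  case (snoc y b)
  let ?w = "foldl push a b"
  have "set ?w \<subseteq> set a \<union> set b" by (rule set_foldl_push)
  then have cw: "fst ` set ?w \<subseteq> carrier G" using snoc.prems(1,2) by (auto simp: image_subset_iff)
  have pw: "prefix p ?w \<or> p = ?w @ [y]"
  proof (cases "?w \<noteq> [] \<and> last ?w = iv y")
    case True
    then have "prefix p (butlast ?w)" using snoc.prems(3) push_can[of ?w y] by simp
    then show ?thesis using prefixeq_butlast prefix_order.trans by blast
  next
    case False
    then have "prefix p (?w @ [y])" using snoc.prems(3) push_app[of ?w y] by simp
    then show ?thesis by auto
  qed
  show ?case
  proof (cases "prefix p ?w")
    case True
    have "prefix p a \<or> (\<exists>b1. prefix b1 b \<and> ev p = ev a \<otimes> ev b1)"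
      using snoc.IH[of p] snoc.prems(1,2) True by (simp add: image_Un)
    then show ?thesis by (metis prefix_snoc)
  next
    case False
    then have p: "p = ?w @ [y]" using pw by auto
    have "ev p = ev a \<otimes> ev b \<otimes> ev [y]" using p cw snoc.prems by (simp add: ev_append ev_foldl_push)
    also have "\<dots> = ev a \<otimes> ev (b @ [y])" using snoc.prems by (simp add: ev_append m_assoc)
    finally show ?thesis by blast
  qed
qed

lemma reduced_unique:
  assumes B: "B \<subseteq> carrier G"
    and nt: "\<And>w. w \<noteq> [] \<Longrightarrow> fst ` set w \<subseteq> B \<Longrightarrow> freely_reduced w \<Longrightarrow> ev w \<noteq> \<one>"
  shows "freely_reduced a \<Longrightarrow> freely_reduced b \<Longrightarrow> fst ` set a \<subseteq> B \<Longrightarrow> fst ` set b \<subseteq> B \<Longrightarrow>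
    ev a = ev b \<Longrightarrow> a = b"
proof (induction "length a + length b" arbitrary: a b rule: less_induct)
  case less
  have ca: "fst ` set a \<subseteq> carrier G" and cb: "fst ` set b \<subseteq> carrier G" using less.prems B by auto
  show ?case
  proof (cases "a \<noteq> [] \<and> b \<noteq> [] \<and> last a = last b")
    case True
    obtain a' y where a: "a = a' @ [y]" using True by (metis append_butlast_last_id)
    obtain b' where b: "b = b' @ [y]" using True a by (metis append_butlast_last_id last_snoc)
    have "ev a' \<otimes> ev [y] = ev b' \<otimes> ev [y]" using less.prems(5) ca cb a b by (simp add: ev_append)
    then have "ev a' = ev b'" using ca cb a b by (simp add: image_Un)
    moreover have "freely_reduced a'" "freely_reduced b'" using less.prems a b fr_snoc by blast+
    ultimately have "a' = b'" using less.hyps[of a' b'] less.prems a b by auto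
    then show ?thesis using a b by simp
  next
    case False
    show ?thesis
    proof (rule ccontr)
      assume ne: "a \<noteq> b"
      let ?w = "a @ invw b"
      have "?w \<noteq> []" using ne by (auto simp: invw_def)
      moreover have "fst ` set ?w \<subseteq> B" using less.prems by (auto simp: invw_def)
      moreover have "freely_reduced ?w"
      proof -
        have "a \<noteq> [] \<Longrightarrow> b \<noteq> [] \<Longrightarrow> hd (invw b) \<noteq> iv (last a)"
          using False by (simp add: invw_def hd_rev last_map)
        then show ?thesis using fr_append[of a "invw b"] fr_invw[of b] less.prems(1,2) by (auto simp: invw_def)
      qed
      moreover have "ev ?w = \<one>"
      proof -
        have ci: "fst ` set (invw b) \<subseteq> carrier G" using cb by (auto simp: invw_def)
        have "ev ?w = ev a \<otimes> ev (invw b)" using ca ci by (rule ev_append)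
        also have "\<dots> = ev b \<otimes> inv (ev b)" using cb less.prems(5) by (simp add: ev_invw)
        also have "\<dots> = \<one>" using cb by simp
        finally show ?thesis .
      qed
      ultimately show False using nt by blast
    qed
  qed
qed

end



lemma dpda_step_cases:
  "dpda_step M c c' \<Longrightarrow> (\<exists>q a w Z \<gamma> p \<alpha>. c = (q, a # w, Z # \<gamma>) \<and> c' = (p, w, \<alpha> @ \<gamma>) \<and> delta M q (Some a) Z = Some (p, \<alpha>))
   \<or> (\<exists>q w Z \<gamma> p \<alpha>. c = (q, w, Z # \<gamma>) \<and> c' = (p, w, \<alpha> @ \<gamma>) \<and> delta M q None Z = Some (p, \<alpha>))"
  by (induction rule: dpda_step.induct) blast+

lemma dpda_nat:
  fixes M :: "('q, 'a, 's) dpda"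
  assumes wf: "dpda_wf M"
  shows "\<exists>M' :: (nat, 'a, nat) dpda. dpda_wf M' \<and> sigma M' = sigma M \<and> dpda_lang M' = dpda_lang M"
proof -
  have fin: "finite (states M)" "finite (stack_syms M)" "finite (sigma M)"
    and ini: "init M \<in> states M" "init_stack M \<in> stack_syms M" "final M \<subseteq> states M"
    and dl: "\<And>q a Z p \<alpha>. delta M q a Z = Some (p, \<alpha>) \<Longrightarrow>
        q \<in> states M \<and> Z \<in> stack_syms M \<and> (\<forall>x. a = Some x \<longrightarrow> x \<in> sigma M) \<and>
        p \<in> states M \<and> set \<alpha> \<subseteq> stack_syms M"
    and det: "\<And>q Z a. delta M q None Z \<noteq> None \<Longrightarrow> delta M q (Some a) Z = None"
    using wf unfolding dpda_wf_def by blast+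
  obtain fq :: "'q \<Rightarrow> nat" where fq: "inj_on fq (states M)"
    using finite_imp_inj_to_nat_seg[OF fin(1)] by blast
  obtain fs :: "'s \<Rightarrow> nat" where fs: "inj_on fs (stack_syms M)"
    using finite_imp_inj_to_nat_seg[OF fin(2)] by blast
  define gq where "gq = inv_into (states M) fq"
  define gs where "gs = inv_into (stack_syms M) fs"
  have gq: "\<And>q. q \<in> states M \<Longrightarrow> gq (fq q) = q" using fq by (simp add: gq_def)
  have gs: "\<And>Z. Z \<in> stack_syms M \<Longrightarrow> gs (fs Z) = Z" using fs by (simp add: gs_def)
  define d' where "d' = (\<lambda>q a Z. if q \<in> fq ` states M \<and> Z \<in> fs ` stack_syms M then
      map_option (\<lambda>(p, \<alpha>). (fq p, map fs \<alpha>)) (delta M (gq q) a (gs Z)) else None)"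
  define M' :: "(nat, 'a, nat) dpda" where "M' = \<lparr>states = fq ` states M, sigma = sigma M,
     stack_syms = fs ` stack_syms M, init = fq (init M), init_stack = fs (init_stack M),
     final = fq ` final M, delta = d'\<rparr>"
  have d'_eq: "\<And>q a Z. q \<in> states M \<Longrightarrow> Z \<in> stack_syms M \<Longrightarrow>
      d' (fq q) a (fs Z) = map_option (\<lambda>(p, \<alpha>). (fq p, map fs \<alpha>)) (delta M q a Z)"
    by (simp add: d'_def gq gs)
  have A: "\<forall>q a Z p \<alpha>. d' q a Z = Some (p, \<alpha>) \<longrightarrow> q \<in> fq ` states M \<and> Z \<in> fs ` stack_syms M \<and> (\<forall>x. a = Some x \<longrightarrow> x \<in> sigma M) \<and>
        p \<in> fq ` states M \<and> set \<alpha> \<subseteq> fs ` stack_syms M"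
  proof (intro allI impI)
    fix q a Z p \<alpha> assume h: "d' q a Z = Some (p, \<alpha>)"
    then obtain q0 Z0 where q0: "q0 \<in> states M" "q = fq q0" and Z0: "Z0 \<in> stack_syms M" "Z = fs Z0"
      unfolding d'_def by (auto split: if_splits)
    then obtain p0 \<alpha>0 where d: "delta M q0 a Z0 = Some (p0, \<alpha>0)" and p: "p = fq p0" "\<alpha> = map fs \<alpha>0"
      using h d'_eq by auto
    from dl[OF d] show "q \<in> fq ` states M \<and> Z \<in> fs ` stack_syms M \<and> (\<forall>x. a = Some x \<longrightarrow> x \<in> sigma M) \<and>
        p \<in> fq ` states M \<and> set \<alpha> \<subseteq> fs ` stack_syms M" using q0 Z0 p by auto
  qed
  have Bd: "\<forall>q Z. d' q None Z \<noteq> None \<longrightarrow> (\<forall>a. d' q (Some a) Z = None)"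
  proof (intro allI impI)
    fix q Z a assume h: "d' q None Z \<noteq> None"
    then obtain q0 Z0 where q0: "q0 \<in> states M" "q = fq q0" and Z0: "Z0 \<in> stack_syms M" "Z = fs Z0"
      unfolding d'_def by (auto split: if_splits)
    then show "d' q (Some a) Z = None" using h det d'_eq by auto
  qed
  have wf': "dpda_wf M'"
    unfolding dpda_wf_def M'_def using fin ini A Bd by auto
  define good where "good = (\<lambda>(q :: 'q, w :: 'a list, \<gamma>). q \<in> states M \<and> set \<gamma> \<subseteq> stack_syms M)"
  define enc where "enc = (\<lambda>(q :: 'q, w :: 'a list, \<gamma>). (fq q, w, map fs \<gamma>))"
  have sim1: "dpda_step M' (enc c) (enc c') \<and> good c'" if "dpda_step M c c'" "good c" for c c'
    using that(1)
  proof cases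
    case (read q a Z p \<alpha> w \<gamma>)
    then show ?thesis using that(2) dl[OF read(3)] d'_eq[of q Z "Some a"]
      by (auto simp: enc_def good_def M'_def intro!: dpda_step.read)
  next
    case (eps q Z p \<alpha> w \<gamma>)
    then show ?thesis using that(2) dl[OF eps(3)] d'_eq[of q Z None]
      by (auto simp: enc_def good_def M'_def intro!: dpda_step.eps)
  qed
  have sim2: "\<exists>c'. d = enc c' \<and> dpda_step M c c'" if "dpda_step M' (enc c) d" "good c" for c d
  proof -
    obtain q w \<gamma> where c: "c = (q, w, \<gamma>)" by (cases c) auto
    have q: "q \<in> states M" and g: "set \<gamma> \<subseteq> stack_syms M" using that(2) c by (auto simp: good_def)
    from that(1) show ?thesis
    proof cases
      case (read q' a Z' p' \<alpha>' w' \<gamma>')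
      from read(1) c obtain Z \<gamma>0 where \<gamma>: "\<gamma> = Z # \<gamma>0" "Z' = fs Z" "\<gamma>' = map fs \<gamma>0" "q' = fq q" "w = a # w'"
        by (cases \<gamma>) (auto simp: enc_def)
      have Z: "Z \<in> stack_syms M" using g \<gamma> by auto
      have "d' (fq q) (Some a) (fs Z) = Some (p', \<alpha>')" using read(3) \<gamma> by (simp add: M'_def)
      then obtain p \<alpha> where d: "delta M q (Some a) Z = Some (p, \<alpha>)" "p' = fq p" "\<alpha>' = map fs \<alpha>"
        using d'_eq[OF q Z] by auto
      show ?thesis
        by (rule exI[of _ "(p, w', \<alpha> @ \<gamma>0)"]) (use read \<gamma> d c in \<open>auto simp: enc_def intro: dpda_step.read\<close>)
    next
      case (eps q' Z' p' \<alpha>' w' \<gamma>')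
      from eps(1) c obtain Z \<gamma>0 where \<gamma>: "\<gamma> = Z # \<gamma>0" "Z' = fs Z" "\<gamma>' = map fs \<gamma>0" "q' = fq q" "w = w'"
        by (cases \<gamma>) (auto simp: enc_def)
      have Z: "Z \<in> stack_syms M" using g \<gamma> by auto
      have "d' (fq q) None (fs Z) = Some (p', \<alpha>')" using eps(3) \<gamma> by (simp add: M'_def)
      then obtain p \<alpha> where d: "delta M q None Z = Some (p, \<alpha>)" "p' = fq p" "\<alpha>' = map fs \<alpha>"
        using d'_eq[OF q Z] by auto
      show ?thesis
        by (rule exI[of _ "(p, w', \<alpha> @ \<gamma>0)"]) (use eps \<gamma> d c in \<open>auto simp: enc_def intro: dpda_step.eps\<close>)
    qed
  qed
  have goodstep: "good c'" if "dpda_step M c c'" "good c" for c c' using sim1[OF that] by simp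
  let ?c0 = "\<lambda>w. (init M, w, [init_stack M])"
  have g0: "good (?c0 w)" for w using ini by (simp add: good_def)
  have fw: "good c \<and> (dpda_step M')\<^sup>*\<^sup>* (enc (?c0 w)) (enc c)" if "(dpda_step M)\<^sup>*\<^sup>* (?c0 w) c" for w c
    using that
  proof (induction rule: rtranclp_induct)
    case base then show ?case using g0 by simp
  next
    case (step c c') then show ?case using sim1[of c c'] by (meson rtranclp.rtrancl_into_rtrancl)
  qed
  have bw: "\<exists>c. d = enc c \<and> good c \<and> (dpda_step M)\<^sup>*\<^sup>* (?c0 w) c" if "(dpda_step M')\<^sup>*\<^sup>* (enc (?c0 w)) d" for w d
    using that
  proof (induction rule: rtranclp_induct)
    case base then show ?case using g0 by blast
  next
    case (step d d')
    then obtain c where c: "d = enc c" "good c" "(dpda_step M)\<^sup>*\<^sup>* (?c0 w) c" by blast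
    then obtain c' where c': "d' = enc c'" "dpda_step M c c'" using sim2 step(2) by blast
    have "good c'" using goodstep c' c by blast
    moreover have "(dpda_step M)\<^sup>*\<^sup>* (?c0 w) c'" using c(3) c'(2) by (rule rtranclp.rtrancl_into_rtrancl)
    ultimately show ?case using c' by blast
  qed
  have enc0: "enc (?c0 w) = (init M', w, [init_stack M'])" for w by (simp add: enc_def M'_def)
  have "dpda_lang M' = dpda_lang M"
  proof (intro equalityI subsetI)
    fix w assume "w \<in> dpda_lang M'"
    then obtain p \<gamma> where w: "set w \<subseteq> sigma M" "(dpda_step M')\<^sup>*\<^sup>* (enc (?c0 w)) (p, [], \<gamma>)" "p \<in> fq ` final M"
      unfolding dpda_lang_def enc0 by (auto simp: M'_def)
    obtain c where c: "(p, [], \<gamma>) = enc c" "good c" "(dpda_step M)\<^sup>*\<^sup>* (?c0 w) c" using bw[OF w(2)] by blast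
    obtain q w' \<gamma>' where cq: "c = (q, w', \<gamma>')" by (cases c) auto
    have "q \<in> states M" "p = fq q" "w' = []" using c cq by (auto simp: enc_def good_def)
    then have "q \<in> final M" using w(3) fq ini(3) by (auto dest: inj_onD)
    then show "w \<in> dpda_lang M" using w(1) c cq \<open>w' = []\<close> unfolding dpda_lang_def by blast
  next
    fix w assume "w \<in> dpda_lang M"
    then obtain p \<gamma> where w: "set w \<subseteq> sigma M" "(dpda_step M)\<^sup>*\<^sup>* (?c0 w) (p, [], \<gamma>)" "p \<in> final M"
      unfolding dpda_lang_def by blast
    have "(dpda_step M')\<^sup>*\<^sup>* (init M', w, [init_stack M']) (fq p, [], map fs \<gamma>)"
      using fw[OF w(2)] enc0 by (simp add: enc_def)
    then show "w \<in> dpda_lang M'" using w unfolding dpda_lang_def by (auto simp: M'_def)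
  qed
  then show ?thesis using wf' by (intro exI[of _ M']) (simp add: M'_def)
qed




type_synonym 'a stt = "'a \<times> bool + 'a \<times> ('a \<times> bool) list"
type_synonym 'a sym = "(('a \<times> bool) \<times> 'a option) option"

locale gwp = group +
  fixes A H F B S :: "'a set"
  assumes A_fin: "finite A" and A_sub: "A \<subseteq> carrier G"
  and F_sub: "subgroup F G" and F_fin: "finite (rcosets\<^bsub>G\<^esub> F)"
  and B_sub: "B \<subseteq> F" and B_gen: "generate (G\<lparr>carrier := F\<rparr>) B = F"
  and B_free: "\<And>w. w \<noteq> [] \<Longrightarrow> fst ` set w \<subseteq> B \<Longrightarrow> freely_reduced w \<Longrightarrow> signed_eval G w \<noteq> \<one>\<^bsub>G\<^esub>"
  and H_sub: "subgroup H G" and S_fin: "finite S" and S_gen: "generate G S = H"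
begin

lemma F_carr: "F \<subseteq> carrier G" using F_sub by (rule subgroup.subset)
lemma B_carr: "B \<subseteq> carrier G" using B_sub F_carr by (rule subset_trans)
lemma H_carr: "H \<subseteq> carrier G" using H_sub by (rule subgroup.subset)
lemma S_H: "S \<subseteq> H"
proof
  fix x assume "x \<in> S" then have "x \<in> generate G S" by (rule generate.incl)
  then show "x \<in> H" using S_gen by simp
qed

lemma ev_F: "fst ` set w \<subseteq> F \<Longrightarrow> ev w \<in> F"
proof (induction w)
  case Nil then show ?case using F_sub subgroup.one_closed by (simp)
next
  case (Cons y w)
  then have "fst y \<in> F" by auto
  then have "(if snd y then fst y else inv (fst y)) \<in> F" using F_sub subgroup.m_inv_closed by auto
  then show ?case using Cons F_sub subgroup.m_closed by (auto simp: ev_Cons)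
qed

lemma H_mult: "x \<in> H \<Longrightarrow> y \<in> H \<Longrightarrow> x \<otimes> y \<in> H" by (rule subgroup.m_closed[OF H_sub])
lemma H_inv: "x \<in> H \<Longrightarrow> inv x \<in> H" by (rule subgroup.m_inv_closed[OF H_sub])
lemma H_one: "\<one> \<in> H" by (rule subgroup.one_closed[OF H_sub])

subsection \<open>coset representatives\<close>

definition rho :: "'a set \<Rightarrow> 'a" where "rho C = (if \<one> \<in> C then \<one> else (SOME r. r \<in> C))"
definition rep :: "'a \<Rightarrow> 'a" where "rep g = rho (F #> g)"
definition T :: "'a set" where "T = rep ` carrier G"

lemma rho_in: "C \<noteq> {} \<Longrightarrow> rho C \<in> C"
  unfolding rho_def by (auto intro: someI)

lemma rep_in: "g \<in> carrier G \<Longrightarrow> rep g \<in> F #> g"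
proof -
  assume g: "g \<in> carrier G"
  then have "g \<in> F #> g" by (rule rcos_self[OF _ F_sub])
  then have "F #> g \<noteq> {}" by auto
  then show ?thesis unfolding rep_def by (rule rho_in)
qed

lemma rep_carrier: "g \<in> carrier G \<Longrightarrow> rep g \<in> carrier G"
  by (rule subgroup.elemrcos_carrier[OF F_sub is_group _ rep_in])

lemma rep_F: assumes g: "g \<in> carrier G" shows "g \<otimes> inv (rep g) \<in> F"
proof -
  obtain f where f: "f \<in> F" "rep g = f \<otimes> g" using rep_in[OF g] unfolding r_coset_def by blast
  have fc: "f \<in> carrier G" using f F_carr by auto
  have "g \<otimes> inv (rep g) = g \<otimes> (inv g \<otimes> inv f)" using f fc g by (simp add: inv_mult_group)
  also have "\<dots> = inv f" using fc g by (simp add: m_assoc[symmetric])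
  finally show ?thesis using subgroup.m_inv_closed[OF F_sub f(1)] by simp
qed

lemma rep_one: "rep \<one> = \<one>"
  unfolding rep_def rho_def using rcos_self[OF one_closed F_sub] by simp

lemma rep_mult: assumes "f \<in> F" "y \<in> carrier G" shows "rep (f \<otimes> y) = rep y"
proof -
  have "F #> (f \<otimes> y) = (F #> f) #> y" using assms F_carr by (simp add: coset_mult_assoc subsetD)
  also have "F #> f = F" using subgroup.rcos_const[OF F_sub is_group assms(1)] .
  finally show ?thesis by (simp add: rep_def)
qed

lemma T_fin: "finite T"
proof -
  have "T \<subseteq> rho ` (rcosets F)" unfolding T_def rep_def using rcosetsI[OF F_carr] by auto
  then show ?thesis using finite_subset finite_imageI[OF F_fin] by metis
qed

lemma T_carr: "T \<subseteq> carrier G" unfolding T_def using rep_carrier by auto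

lemma one_T: "\<one> \<in> T" unfolding T_def using rep_one by force

definition mm :: "'a \<Rightarrow> 'a \<Rightarrow> 'a" where "mm t x = t \<otimes> x \<otimes> inv (rep (t \<otimes> x))"

lemma mm_F: "t \<in> carrier G \<Longrightarrow> x \<in> carrier G \<Longrightarrow> mm t x \<in> F"
  unfolding mm_def using rep_F by simp

subsection \<open>reduced words\<close>

lemma exists_rw: "g \<in> F \<Longrightarrow> \<exists>w. freely_reduced w \<and> fst ` set w \<subseteq> B \<and> ev w = g"
proof -
  assume "g \<in> F"
  then have "g \<in> generate (G\<lparr>carrier := F\<rparr>) B" using B_gen by simp
  then show ?thesis
  proof (induction rule: generate.induct)
    case one then show ?case by (intro exI[of _ "[]"]) simp
  next
    case (incl h)
    have hc: "h \<in> carrier G" using incl B_carr by (rule subsetD[rotated])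
    show ?case
    proof (intro exI conjI)
      show "freely_reduced [(h, True)]" by (simp add: fr_conv)
      show "fst ` set [(h, True)] \<subseteq> B" using incl by simp
      show "ev [(h, True)] = h" using hc by (simp add: ev_Cons)
    qed
  next
    case (inv h)
    have hc: "h \<in> carrier G" using inv B_carr by (rule subsetD[rotated])
    have hF: "h \<in> F" using inv B_sub by (rule subsetD[rotated])
    show ?case
    proof (intro exI conjI)
      show "freely_reduced [(h, False)]" by (simp add: fr_conv)
      show "fst ` set [(h, False)] \<subseteq> B" using inv by simp
      show "ev [(h, False)] = inv\<^bsub>G\<lparr>carrier := F\<rparr>\<^esub> h" using hc hF F_sub by (simp add: ev_Cons)
    qed
  next
    case (eng h1 h2)
    obtain w1 where w1: "freely_reduced w1" "fst ` set w1 \<subseteq> B" "ev w1 = h1" using eng.IH(1) by (elim exE conjE)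
    obtain w2 where w2: "freely_reduced w2" "fst ` set w2 \<subseteq> B" "ev w2 = h2" using eng.IH(2) by (elim exE conjE)
    note w = w1 w2
    have "fst ` set (foldl push w1 w2) \<subseteq> fst ` set w1 \<union> fst ` set w2" using set_foldl_push[of w1 w2] by auto
    moreover have "fst ` set w1 \<union> fst ` set w2 \<subseteq> B" using w by simp
    ultimately have "fst ` set (foldl push w1 w2) \<subseteq> B" by (rule subset_trans)
    moreover have "ev (foldl push w1 w2) = h1 \<otimes> h2" using w B_carr by (simp add: ev_foldl_push subset_trans)
    moreover have "freely_reduced (foldl push w1 w2)" using fr_foldl_push w(1) by blast
    ultimately show ?case by (intro exI[of _ "foldl push w1 w2"]) simp
  qed
qed

definition rw :: "'a \<Rightarrow> ('a \<times> bool) list" where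
  "rw g = (SOME w. freely_reduced w \<and> fst ` set w \<subseteq> B \<and> ev w = g)"

lemma rw_spec: "g \<in> F \<Longrightarrow> freely_reduced (rw g) \<and> fst ` set (rw g) \<subseteq> B \<and> ev (rw g) = g"
  unfolding rw_def using exists_rw by (rule someI_ex)

lemma red_unique: "freely_reduced a \<Longrightarrow> freely_reduced b \<Longrightarrow> fst ` set a \<subseteq> B \<Longrightarrow> fst ` set b \<subseteq> B \<Longrightarrow>
    ev a = ev b \<Longrightarrow> a = b"
  using reduced_unique[OF B_carr B_free] by blast

lemma rw_unique: assumes "freely_reduced w" "fst ` set w \<subseteq> B" shows "rw (ev w) = w"
proof -
  have "fst ` set w \<subseteq> F" using assms(2) B_sub by (rule subset_trans)
  then have "ev w \<in> F" by (rule ev_F)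
  then have "freely_reduced (rw (ev w)) \<and> fst ` set (rw (ev w)) \<subseteq> B \<and> ev (rw (ev w)) = ev w" by (rule rw_spec)
  then show ?thesis using red_unique[of "rw (ev w)" w] assms by blast
qed


lemma cancel1[simp]: "a \<in> carrier G \<Longrightarrow> b \<in> carrier G \<Longrightarrow> a \<otimes> (inv a \<otimes> b) = b"
  by (simp add: m_assoc[symmetric])
lemma cancel2[simp]: "a \<in> carrier G \<Longrightarrow> b \<in> carrier G \<Longrightarrow> inv a \<otimes> (a \<otimes> b) = b"
  by (simp add: m_assoc[symmetric])

lemma cancel_aux: assumes "k \<in> carrier G" "t \<in> carrier G" "e \<in> carrier G"
  shows "(k \<otimes> (inv t \<otimes> e)) \<otimes> inv (inv t \<otimes> e) = k"
proof -
  have "inv t \<otimes> e \<in> carrier G" using assms by simp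
  then have "(k \<otimes> (inv t \<otimes> e)) \<otimes> inv (inv t \<otimes> e) = k \<otimes> ((inv t \<otimes> e) \<otimes> inv (inv t \<otimes> e))"
    using assms by (simp add: m_assoc)
  also have "\<dots> = k" using assms by simp
  finally show ?thesis .
qed

definition S' :: "'a set" where "S' = S \<union> (\<lambda>x. inv x) ` S"

definition P :: "'a set" where
  "P = insert \<one> (\<Union>t\<in>T. \<Union>s\<in>S'. (\<lambda>p. inv t \<otimes> ev p) ` {p. prefix p (rw (mm t s))})"

lemma S'_carr: "S' \<subseteq> carrier G" unfolding S'_def using S_H H_carr by auto
lemma S'_H: "S' \<subseteq> H" unfolding S'_def using S_H H_inv by auto

lemma P_fin: "finite P"
proof -
  have "finite {p. prefix p (rw (mm t s))}" for t s
  proof -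
    have "{p. prefix p (rw (mm t s))} = set (prefixes (rw (mm t s)))" by auto
    then show ?thesis by simp
  qed
  then show ?thesis unfolding P_def using T_fin S_fin by (simp add: S'_def)
qed

lemma rw_mm: "t \<in> carrier G \<Longrightarrow> x \<in> carrier G \<Longrightarrow>
   freely_reduced (rw (mm t x)) \<and> fst ` set (rw (mm t x)) \<subseteq> B \<and> ev (rw (mm t x)) = mm t x"
  using rw_spec mm_F by blast

lemma prefix_carr: "prefix p w \<Longrightarrow> fst ` set w \<subseteq> B \<Longrightarrow> fst ` set p \<subseteq> carrier G"
  using B_carr by (auto dest: set_mono_prefix)

lemma P_carr: "P \<subseteq> carrier G"
proof -
  have "inv t \<otimes> ev p \<in> carrier G" if "t \<in> T" "s \<in> S'" "prefix p (rw (mm t s))" for t s p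
  proof -
    have tc: "t \<in> carrier G" using that(1) T_carr by (rule subsetD[rotated])
    have "s \<in> carrier G" using that(2) S'_carr by (rule subsetD[rotated])
    then have "fst ` set (rw (mm t s)) \<subseteq> B" using rw_mm tc by blast
    then have "fst ` set p \<subseteq> carrier G" using that(3) prefix_carr by blast
    then show ?thesis using tc by simp
  qed
  then show ?thesis unfolding P_def by auto
qed

definition Pr :: "'a \<Rightarrow> bool" where
  "Pr h = (\<forall>p. prefix p (rw (h \<otimes> inv (rep h))) \<longrightarrow> (\<exists>q\<in>P. ev p \<otimes> inv q \<in> H))"

lemma Pr_one: "Pr \<one>"
proof -
  have "rw \<one> = []" using rw_unique[of "[]"] by simp
  then show ?thesis unfolding Pr_def P_def using rep_one H_one by auto
qed

lemma Pr_step: assumes k: "k \<in> H" "Pr k" and s: "s \<in> S'" shows "Pr (k \<otimes> s)"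
proof -
  have kc: "k \<in> carrier G" using k H_carr by auto
  have sc: "s \<in> carrier G" using s S'_carr by auto
  define t where "t = rep k"
  have tc: "t \<in> carrier G" and tT: "t \<in> T" using rep_carrier kc by (auto simp: t_def T_def)
  have kF: "k \<otimes> inv t \<in> F" using rep_F kc t_def by simp
  define f where "f = rw (k \<otimes> inv t)"
  define u where "u = rw (mm t s)"
  have f: "freely_reduced f" "fst ` set f \<subseteq> B" "ev f = k \<otimes> inv t" using rw_spec kF f_def by auto
  have u: "freely_reduced u" "fst ` set u \<subseteq> B" "ev u = mm t s" using rw_mm tc sc u_def by auto
  have fc: "fst ` set f \<subseteq> carrier G" and uc: "fst ` set u \<subseteq> carrier G" using f u B_carr by auto
  define w where "w = foldl push f u"
  have rks: "rep (k \<otimes> s) = rep (t \<otimes> s)"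
  proof -
    have "inv t \<otimes> (t \<otimes> s) = s" using tc sc by (simp add: m_assoc[symmetric])
    then have "k \<otimes> s = (k \<otimes> inv t) \<otimes> (t \<otimes> s)" using kc tc sc by (simp add: m_assoc)
    then show ?thesis using rep_mult[OF kF] tc sc by simp
  qed
  have evw: "ev w = k \<otimes> s \<otimes> inv (rep (k \<otimes> s))"
  proof -
    have rc: "rep (t \<otimes> s) \<in> carrier G" using rep_carrier tc sc by simp
    have "ev w = (k \<otimes> inv t) \<otimes> (t \<otimes> s \<otimes> inv (rep (t \<otimes> s)))"
      using ev_foldl_push[OF fc uc] f u by (simp add: w_def mm_def)
    also have "\<dots> = k \<otimes> s \<otimes> inv (rep (t \<otimes> s))" using kc tc sc rc by (simp add: m_assoc[symmetric])
      (simp add: m_assoc)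
    finally show ?thesis using rks by simp
  qed
  have w: "freely_reduced w" "fst ` set w \<subseteq> B" using fr_foldl_push f u letters_foldl_push[of f B u]
    by (auto simp: w_def)
  have rww: "rw (k \<otimes> s \<otimes> inv (rep (k \<otimes> s))) = w" using rw_unique[OF w] evw by simp
  show ?thesis unfolding Pr_def rww
  proof (intro allI impI)
    fix p assume p: "prefix p w"
    from prefix_foldl_push[OF fc uc p[unfolded w_def]]
    show "\<exists>q\<in>P. ev p \<otimes> inv q \<in> H"
    proof
      assume "prefix p f" then show ?thesis using k(2) unfolding Pr_def f_def t_def by blast
    next
      assume "\<exists>b1. prefix b1 u \<and> ev p = ev f \<otimes> ev b1"
      then obtain b1 where b1: "prefix b1 u" "ev p = ev f \<otimes> ev b1" by blast
      have b1c: "fst ` set b1 \<subseteq> carrier G" using prefix_carr b1 u by blast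
      have qP: "inv t \<otimes> ev b1 \<in> P" unfolding P_def using tT s b1(1) u_def by blast
      have "ev p \<otimes> inv (inv t \<otimes> ev b1) = k"
        using b1 f kc tc b1c cancel_aux by (simp add: m_assoc)
      then show ?thesis using qP k by metis
    qed
  qed
qed

lemma Pr_H: assumes "h \<in> H" shows "Pr h"
proof -
  have "\<forall>k\<in>H. Pr k \<longrightarrow> Pr (k \<otimes> h)" if "h \<in> generate G S" for h
    using that
  proof (induction rule: generate.induct)
    case one then show ?case using H_carr by auto
  next
    case (incl h) then show ?case using Pr_step S'_def by blast
  next
    case (inv h) then show ?case using Pr_step S'_def by blast
  next
    case (eng h1 h2)
    show ?case
    proof (intro ballI impI)
      fix k assume k: "k \<in> H" "Pr k"
      have h1: "h1 \<in> H" "h2 \<in> H" using eng S_gen by auto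
      have "Pr (k \<otimes> h1)" using eng k by blast
      moreover have "k \<otimes> h1 \<in> H" using k h1 H_mult by blast
      ultimately have "Pr (k \<otimes> h1 \<otimes> h2)" using eng by blast
      then show "Pr (k \<otimes> (h1 \<otimes> h2))" using k h1 H_carr by (simp add: m_assoc subsetD)
    qed
  qed
  then show ?thesis using assms S_gen Pr_one H_one by (metis H_carr l_one subsetD)
qed


subsection \<open>the finite automaton on stack words\<close>

definition dstep :: "'a option \<Rightarrow> 'a \<times> bool \<Rightarrow> 'a option" where
  "dstep qo y = (case qo of None \<Rightarrow> None | Some q \<Rightarrow>
     (if \<exists>q'\<in>P. q \<otimes> ev [y] \<otimes> inv q' \<in> H then Some (SOME q'. q' \<in> P \<and> q \<otimes> ev [y] \<otimes> inv q' \<in> H) else None))"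

definition runa :: "('a \<times> bool) list \<Rightarrow> 'a option" where "runa w = foldl dstep (Some \<one>) w"

lemma runa_snoc: "runa (w @ [y]) = dstep (runa w) y" by (simp add: runa_def)

lemma dstep_Some: assumes "dstep qo y = Some q'"
  shows "\<exists>q. qo = Some q \<and> q' \<in> P \<and> q \<otimes> ev [y] \<otimes> inv q' \<in> H"
proof -
  obtain q where q: "qo = Some q" using assms by (cases qo) (auto simp: dstep_def)
  then have ex: "\<exists>q'\<in>P. q \<otimes> ev [y] \<otimes> inv q' \<in> H" using assms by (auto simp: dstep_def split: if_splits)
  then have "q' = (SOME q'. q' \<in> P \<and> q \<otimes> ev [y] \<otimes> inv q' \<in> H)" using assms q by (simp add: dstep_def)
  moreover have "(SOME q'. q' \<in> P \<and> q \<otimes> ev [y] \<otimes> inv q' \<in> H) \<in> P \<and>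
      q \<otimes> ev [y] \<otimes> inv (SOME q'. q' \<in> P \<and> q \<otimes> ev [y] \<otimes> inv q' \<in> H) \<in> H"
    using ex by (metis (mono_tags, lifting) someI_ex) 
  ultimately show ?thesis using q by auto
qed

lemma dstep_range: "dstep qo y \<in> insert None (Some ` P)"
  using dstep_Some[of qo y] by (cases "dstep qo y") auto

lemma runa_range: "runa w \<in> insert None (Some ` P)"
proof (cases w rule: rev_exhaust)
  case Nil then show ?thesis by (simp add: runa_def P_def)
next
  case (snoc w' y) then show ?thesis using dstep_range by (simp add: runa_snoc)
qed

lemma runa_inv: "fst ` set w \<subseteq> carrier G \<Longrightarrow> runa w = Some q \<Longrightarrow> ev w \<otimes> inv q \<in> H"
proof (induction w arbitrary: q rule: rev_induct)
  case Nil
  then have "q = \<one>" by (simp add: runa_def)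
  then show ?case using H_one by simp
next
  case (snoc y w)
  obtain q0 where q0: "runa w = Some q0" "q \<in> P" "q0 \<otimes> ev [y] \<otimes> inv q \<in> H"
    using dstep_Some snoc.prems(2) by (metis runa_snoc)
  have wc: "fst ` set w \<subseteq> carrier G" and yc: "fst y \<in> carrier G" using snoc.prems by auto
  have IH: "ev w \<otimes> inv q0 \<in> H" using snoc.IH[OF wc q0(1)] .
  have q0P: "q0 \<in> P" using runa_range[of w] q0(1) by auto
  have q0c: "q0 \<in> carrier G" and qc: "q \<in> carrier G" using q0P q0(2) P_carr by auto
  have evyc: "ev [y] \<in> carrier G" using yc by simp
  have "ev (w @ [y]) \<otimes> inv q = (ev w \<otimes> inv q0) \<otimes> (q0 \<otimes> ev [y] \<otimes> inv q)"
    using wc yc q0c qc evyc by (simp add: ev_append m_assoc)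
  then show ?case using H_mult IH q0(3) by simp
qed

lemma runa_some: "fst ` set w \<subseteq> carrier G \<Longrightarrow> (\<forall>p. prefix p w \<longrightarrow> (\<exists>q\<in>P. ev p \<otimes> inv q \<in> H)) \<Longrightarrow> runa w \<noteq> None"
proof (induction w rule: rev_induct)
  case Nil then show ?case by (simp add: runa_def)
next
  case (snoc y w)
  have wc: "fst ` set w \<subseteq> carrier G" and yc: "fst y \<in> carrier G" using snoc.prems by auto
  have "runa w \<noteq> None" using snoc.IH[OF wc] snoc.prems(2) by (meson prefix_order.trans prefix_snoc)
  then obtain q where q: "runa w = Some q" by auto
  have qc: "q \<in> carrier G" using runa_range[of w] q P_carr by auto
  have Hw: "ev w \<otimes> inv q \<in> H" using runa_inv[OF wc q] .
  obtain q' where q': "q' \<in> P" "ev (w @ [y]) \<otimes> inv q' \<in> H" using snoc.prems(2) by auto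
  have q'c: "q' \<in> carrier G" using q' P_carr by auto
  have evyc: "ev [y] \<in> carrier G" using yc by simp
  have evw: "ev w \<in> carrier G" using wc by simp
  have "q \<otimes> ev [y] \<otimes> inv q' = inv (ev w \<otimes> inv q) \<otimes> (ev (w @ [y]) \<otimes> inv q')"
    using wc yc qc q'c evyc evw by (simp add: ev_append m_assoc inv_mult_group)
  then have "q \<otimes> ev [y] \<otimes> inv q' \<in> H" using H_mult H_inv Hw q'(2) by simp
  then have "\<exists>q'\<in>P. q \<otimes> ev [y] \<otimes> inv q' \<in> H" using q'(1) by blast
  then show ?case using q by (simp add: runa_snoc dstep_def)
qed

definition acc :: "'a \<Rightarrow> 'a option \<Rightarrow> bool" where
  "acc t qo = (case qo of None \<Rightarrow> False | Some q \<Rightarrow> q \<otimes> t \<in> H)"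

lemma acc_correct: assumes g: "g \<in> carrier G" and f: "f = rw (g \<otimes> inv (rep g))"
  shows "acc (rep g) (runa f) \<longleftrightarrow> g \<in> H"
proof -
  define t where "t = rep g"
  have tc: "t \<in> carrier G" using rep_carrier g t_def by simp
  have gF: "g \<otimes> inv t \<in> F" using rep_F g t_def by simp
  have fs: "freely_reduced f" "fst ` set f \<subseteq> B" "ev f = g \<otimes> inv t" using rw_spec[OF gF] f t_def by auto
  have fc: "fst ` set f \<subseteq> carrier G" using fs B_carr by auto
  show ?thesis
  proof
    assume a: "acc (rep g) (runa f)"
    then obtain q where q: "runa f = Some q" "q \<otimes> t \<in> H" by (cases "runa f") (auto simp: acc_def t_def)
    have qc: "q \<in> carrier G" using runa_range[of f] q P_carr by auto
    have h1: "ev f \<otimes> inv q \<in> H" using runa_inv[OF fc q(1)] .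
    have "g = (ev f \<otimes> inv q) \<otimes> (q \<otimes> t)" using fs g tc qc by (simp add: m_assoc)
    then show "g \<in> H" using H_mult h1 q(2) by metis
  next
    assume gH: "g \<in> H"
    have "Pr g" using Pr_H[OF gH] .
    then have "\<forall>p. prefix p f \<longrightarrow> (\<exists>q\<in>P. ev p \<otimes> inv q \<in> H)" unfolding Pr_def f by blast
    then have "runa f \<noteq> None" using runa_some[OF fc] by blast
    then obtain q where q: "runa f = Some q" by auto
    have qc: "q \<in> carrier G" using runa_range[of f] q P_carr by auto
    have h1: "ev f \<otimes> inv q \<in> H" using runa_inv[OF fc q] .
    have "q \<otimes> t = inv (ev f \<otimes> inv q) \<otimes> g" using fs g tc qc by (simp add: m_assoc inv_mult_group)
    then have "q \<otimes> t \<in> H" using H_mult H_inv h1 gH by metis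
    then show "acc (rep g) (runa f)" using q by (simp add: acc_def t_def)
  qed
qed


subsection \<open>the pushdown automaton\<close>

lemma word_eval_carr: "set v \<subseteq> carrier G \<Longrightarrow> word_eval G v \<in> carrier G"
  by (induction v) (auto simp: word_eval_def)

lemma word_eval_snoc: "set v \<subseteq> carrier G \<Longrightarrow> x \<in> carrier G \<Longrightarrow> word_eval G (v @ [x]) = word_eval G v \<otimes> x"
proof (induction v)
  case Nil then show ?case by (simp add: word_eval_def)
next
  case (Cons a v)
  have "word_eval G ((a # v) @ [x]) = a \<otimes> word_eval G (v @ [x])" by (simp add: word_eval_def)
  also have "\<dots> = a \<otimes> (word_eval G v \<otimes> x)" using Cons by simp
  also have "\<dots> = word_eval G (a # v) \<otimes> x" using Cons word_eval_carr[of v] by (simp add: word_eval_def m_assoc)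
  finally show ?case .
qed

definition B0 :: "'a set" where "B0 = (\<Union>t\<in>T. \<Union>x\<in>A. fst ` set (rw (mm t x)))"
definition Ysuf :: "('a \<times> bool) list set" where
  "Ysuf = insert [] {ys. \<exists>t\<in>T. \<exists>x\<in>A. suffix ys (rw (mm t x))}"

lemma B0_B: "B0 \<subseteq> B"
proof -
  have "fst ` set (rw (mm t x)) \<subseteq> B" if "t \<in> T" "x \<in> A" for t x
    using rw_mm that T_carr A_sub by blast
  then show ?thesis unfolding B0_def by blast
qed

lemma B0_carr: "B0 \<subseteq> carrier G" using B0_B B_carr by (rule subset_trans)

lemma B0_fin: "finite B0" unfolding B0_def using T_fin A_fin by simp

lemma Ysuf_fin: "finite Ysuf"
proof -
  have "{ys. \<exists>t\<in>T. \<exists>x\<in>A. suffix ys (rw (mm t x))} \<subseteq> (\<Union>t\<in>T. \<Union>x\<in>A. set (suffixes (rw (mm t x))))"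
  proof
    fix ys assume "ys \<in> {ys. \<exists>t\<in>T. \<exists>x\<in>A. suffix ys (rw (mm t x))}"
    then obtain t x where tx: "t \<in> T" "x \<in> A" "suffix ys (rw (mm t x))" by blast
    then have "ys \<in> set (suffixes (rw (mm t x)))" by simp
    then show "ys \<in> (\<Union>t\<in>T. \<Union>x\<in>A. set (suffixes (rw (mm t x))))" using tx(1,2) by blast
  qed
  moreover have "finite (\<Union>t\<in>T. \<Union>x\<in>A. set (suffixes (rw (mm t x))))" using T_fin A_fin by simp
  ultimately show ?thesis unfolding Ysuf_def using finite_subset by blast
qed

lemma Ysuf_Cons: "y # ys \<in> Ysuf \<Longrightarrow> ys \<in> Ysuf \<and> fst y \<in> B0"
proof -
  assume "y # ys \<in> Ysuf"
  then obtain t x where tx: "t \<in> T" "x \<in> A" "suffix (y # ys) (rw (mm t x))" by (auto simp: Ysuf_def)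
  then have "suffix ys (rw (mm t x))" by (meson suffix_ConsD)
  moreover have "y \<in> set (rw (mm t x))" using tx(3) by (meson list.set_intros(1) set_mono_suffix subsetD)
  ultimately show ?thesis using tx unfolding Ysuf_def B0_def by blast
qed

lemma Ysuf_B0: "ys \<in> Ysuf \<Longrightarrow> fst ` set ys \<subseteq> B0"
  by (induction ys) (auto dest: Ysuf_Cons)

lemma rw_Ysuf: "t \<in> T \<Longrightarrow> x \<in> A \<Longrightarrow> rw (mm t x) \<in> Ysuf"
  unfolding Ysuf_def by blast

definition Gam :: "(('a \<times> bool) \<times> 'a option) option set" where
  "Gam = insert None (Some ` ((B0 \<times> UNIV) \<times> insert None (Some ` P)))"

definition Qs :: "('a \<times> bool + 'a \<times> ('a \<times> bool) list) set" where
  "Qs = Inl ` (T \<times> UNIV) \<union> Inr ` (T \<times> Ysuf)"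

lemma Gam_fin: "finite Gam" unfolding Gam_def using B0_fin P_fin by simp
lemma Qs_fin: "finite Qs" unfolding Qs_def using T_fin Ysuf_fin by simp

definition topq :: "(('a \<times> bool) \<times> 'a option) option \<Rightarrow> 'a option" where
  "topq Z = (case Z of None \<Rightarrow> Some \<one> | Some (y, qo) \<Rightarrow> qo)"
definition isinv :: "'a \<times> bool \<Rightarrow> (('a \<times> bool) \<times> 'a option) option \<Rightarrow> bool" where
  "isinv y Z = (case Z of None \<Rightarrow> False | Some (y', qo) \<Rightarrow> y' = iv y)"
definition newstk where
  "newstk y Z = (if isinv y Z then [] else [Some (y, dstep (topq Z) y), Z])"

fun delta0 :: "'a stt \<Rightarrow> 'a option \<Rightarrow> 'a sym \<Rightarrow> ('a stt \<times> 'a sym list) option" where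
  "delta0 (Inl (t, b)) (Some x) Z = (if t \<in> T \<and> x \<in> A \<and> Z \<in> Gam then Some (Inr (rep (t \<otimes> x), rw (mm t x)), [Z]) else None)"
| "delta0 (Inl (t, b)) None Z = None"
| "delta0 (Inr (t, [])) None Z = (if t \<in> T \<and> Z \<in> Gam then Some (Inl (t, acc t (topq Z)), [Z]) else None)"
| "delta0 (Inr (t, y # ys)) None Z = (if t \<in> T \<and> y # ys \<in> Ysuf \<and> Z \<in> Gam then Some (Inr (t, ys), newstk y Z) else None)"
| "delta0 (Inr tys) (Some x) Z = None"

fun stk :: "('a \<times> bool) list \<Rightarrow> (('a \<times> bool) \<times> 'a option) option list" where
  "stk [] = [None]"
| "stk (y # r) = Some (y, runa (rev (y # r))) # stk r"

lemma stk_nonempty: "stk r = hd (stk r) # tl (stk r)" by (cases r) auto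

lemma stk_topq: "topq (hd (stk r)) = runa (rev r)"
  by (cases r) (auto simp: topq_def runa_def)

lemma stk_Gam: "fst ` set r \<subseteq> B0 \<Longrightarrow> set (stk r) \<subseteq> Gam"
proof (induction r)
  case Nil then show ?case by (simp add: Gam_def)
next
  case (Cons y r)
  have "runa (rev (y # r)) \<in> insert None (Some ` P)" by (rule runa_range)
  then show ?case using Cons by (auto simp: Gam_def mem_Times_iff)
qed

lemma stk_push: "newstk y (hd (stk (rev f))) @ tl (stk (rev f)) = stk (rev (push f y))"
proof (cases "f \<noteq> [] \<and> last f = iv y")
  case True
  then obtain r where r: "rev f = iv y # r" by (cases "rev f") (auto simp: last_rev[symmetric])
  then have "rev (butlast f) = r" by (metis butlast_snoc rev_rev_ident rev.simps(2))
  moreover have "isinv y (hd (stk (rev f)))" using r by (simp add: isinv_def)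
  ultimately show ?thesis using True r by (simp add: push_can newstk_def)
next
  case False
  then have ni: "\<not> isinv y (hd (stk (rev f)))"
    by (cases "rev f") (auto simp: isinv_def last_rev[symmetric] dest: arg_cong[where f=rev])
  have "stk (rev (push f y)) = Some (y, runa (f @ [y])) # stk (rev f)" using False by (simp add: push_app)
  also have "runa (f @ [y]) = dstep (topq (hd (stk (rev f)))) y" by (simp add: runa_snoc stk_topq)
  finally show ?thesis using ni stk_nonempty[of "rev f"] by (simp add: newstk_def)
qed


definition Mdp :: "('a stt, 'a, 'a sym) dpda" where
  "Mdp = \<lparr>states = Qs, sigma = A, stack_syms = Gam, init = Inl (\<one>, True), init_stack = None,
     final = Inl ` (T \<times> {True}), delta = delta0\<rparr>"

lemma rep_T: "g \<in> carrier G \<Longrightarrow> rep g \<in> T" unfolding T_def by blast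

lemma newstk_Gam: "Z \<in> Gam \<Longrightarrow> fst y \<in> B0 \<Longrightarrow> set (newstk y Z) \<subseteq> Gam"
  using dstep_range[of "topq Z" y] by (auto simp: newstk_def Gam_def mem_Times_iff)

lemma delta0_Some: "delta0 q a Z = Some (p, \<alpha>) \<Longrightarrow>
   q \<in> Qs \<and> Z \<in> Gam \<and> (\<forall>x. a = Some x \<longrightarrow> x \<in> A) \<and> p \<in> Qs \<and> set \<alpha> \<subseteq> Gam"
proof (induction q a Z rule: delta0.induct)
  case (1 t b x Z)
  then have h: "t \<in> T" "x \<in> A" "Z \<in> Gam" by (auto split: if_splits)
  have "rep (t \<otimes> x) \<in> T" using h T_carr A_sub by (intro rep_T) auto
  then show ?case using 1 h rw_Ysuf[of t x] by (auto simp: Qs_def split: if_splits)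
next
  case (3 t Z)
  then show ?case by (auto simp: Qs_def Ysuf_def split: if_splits)
next
  case (4 t y ys Z)
  then have h: "t \<in> T" "y # ys \<in> Ysuf" "Z \<in> Gam" by (auto split: if_splits)
  then show ?case using 4 Ysuf_Cons[OF h(2)] newstk_Gam[OF h(3), of y] by (auto simp: Qs_def split: if_splits)
qed auto

lemma Mdp_wf: "dpda_wf Mdp"
proof -
  have "\<forall>q Z. delta0 q None Z \<noteq> None \<longrightarrow> (\<forall>a. delta0 q (Some a) Z = None)"
  proof (intro allI impI)
    fix q Z a assume "delta0 q None Z \<noteq> None"
    then show "delta0 q (Some a) Z = None" by (cases "(q, None :: 'a option, Z)" rule: delta0.cases) auto
  qed
  moreover have "Inl (\<one>, True) \<in> Qs" using one_T by (auto simp: Qs_def)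
  moreover have "Inl ` (T \<times> {True}) \<subseteq> Qs" by (auto simp: Qs_def)
  ultimately show ?thesis unfolding dpda_wf_def Mdp_def
    using Qs_fin Gam_fin A_fin delta0_Some by (auto simp: Gam_def)
qed

definition Inv :: "'a list \<Rightarrow> 'a stt \<times> 'a list \<times> 'a sym list \<Rightarrow> bool" where
  "Inv w c = (\<exists>v f. w = v @ fst (snd c) \<and> freely_reduced f \<and> fst ` set f \<subseteq> B0 \<and> snd (snd c) = stk (rev f) \<and>
     (case fst c of Inl (t, b) \<Rightarrow> t = rep (word_eval G v) \<and> ev f = word_eval G v \<otimes> inv t \<and> b = (word_eval G v \<in> H)
      | Inr (t, ys) \<Rightarrow> ys \<in> Ysuf \<and> t = rep (word_eval G v) \<and> ev f \<otimes> ev ys = word_eval G v \<otimes> inv t))"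

lemma f_carr: "fst ` set f \<subseteq> B0 \<Longrightarrow> fst ` set f \<subseteq> carrier G" using B0_carr by blast

lemma read_alg: assumes v: "set v \<subseteq> carrier G" and x: "x \<in> carrier G" and f: "fst ` set f \<subseteq> B0"
  and t: "t = rep (word_eval G v)" and e: "ev f = word_eval G v \<otimes> inv t"
  shows "rep (t \<otimes> x) = rep (word_eval G (v @ [x]))"
    and "ev f \<otimes> ev (rw (mm t x)) = word_eval G (v @ [x]) \<otimes> inv (rep (t \<otimes> x))"
proof -
  define g where "g = word_eval G v"
  have gc: "g \<in> carrier G" using word_eval_carr v g_def by simp
  have tc: "t \<in> carrier G" using t rep_carrier gc g_def by simp
  have fc: "fst ` set f \<subseteq> carrier G" using f_carr[OF f] .
  have efF: "ev f \<in> F" using ev_F f B0_B B_sub by (meson subset_trans)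
  have g: "g = ev f \<otimes> t" using e gc tc g_def by (simp add: m_assoc)
  have wx: "word_eval G (v @ [x]) = g \<otimes> x" using word_eval_snoc v x g_def by simp
  have "rep (g \<otimes> x) = rep (ev f \<otimes> (t \<otimes> x))" using g fc tc x by (simp add: m_assoc)
  also have "\<dots> = rep (t \<otimes> x)" using rep_mult[OF efF] tc x by simp
  finally show "rep (t \<otimes> x) = rep (word_eval G (v @ [x]))" using wx by simp
  have rc: "rep (t \<otimes> x) \<in> carrier G" using rep_carrier tc x by simp
  have "ev (rw (mm t x)) = mm t x" using rw_mm tc x by blast
  then show "ev f \<otimes> ev (rw (mm t x)) = word_eval G (v @ [x]) \<otimes> inv (rep (t \<otimes> x))"
    using wx g fc tc x rc by (simp add: mm_def m_assoc)
qed

lemma acc_step: assumes v: "set v \<subseteq> carrier G" and f: "freely_reduced f" "fst ` set f \<subseteq> B0"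
  and t: "t = rep (word_eval G v)" and e: "ev f = word_eval G v \<otimes> inv t"
  shows "acc t (runa f) = (word_eval G v \<in> H)"
proof -
  have "rw (ev f) = f" using rw_unique f B0_B by (meson subset_trans)
  then show ?thesis using acc_correct[of "word_eval G v" f] word_eval_carr[OF v] t e by simp
qed

lemma Inv_step: assumes w: "set w \<subseteq> A" and I: "Inv w c" and s: "dpda_step Mdp c c'" shows "Inv w c'"
  using s
proof cases
  case (read q a Z p \<alpha> rest \<gamma>)
  from I read obtain v f where vf: "w = v @ a # rest" "freely_reduced f" "fst ` set f \<subseteq> B0" "Z # \<gamma> = stk (rev f)"
    "case q of Inl (t, b) \<Rightarrow> t = rep (word_eval G v) \<and> ev f = word_eval G v \<otimes> inv t \<and> b = (word_eval G v \<in> H)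
      | Inr (t, ys) \<Rightarrow> ys \<in> Ysuf \<and> t = rep (word_eval G v) \<and> ev f \<otimes> ev ys = word_eval G v \<otimes> inv t"
    unfolding Inv_def by auto
  have d: "delta0 q (Some a) Z = Some (p, \<alpha>)" using read by (simp add: Mdp_def)
  obtain t b where q: "q = Inl (t, b)" using d by (cases q) auto
  have h: "t \<in> T" "a \<in> A" "Z \<in> Gam" and p: "p = Inr (rep (t \<otimes> a), rw (mm t a))" "\<alpha> = [Z]"
    using d q by (auto split: if_splits)
  have vc: "set v \<subseteq> carrier G" and ac: "a \<in> carrier G" using w vf(1) A_sub by auto
  have tv: "t = rep (word_eval G v)" and ev: "ev f = word_eval G v \<otimes> inv t" using vf(5) q by auto
  note ra = read_alg[OF vc ac vf(3) tv ev]
  show ?thesis unfolding Inv_def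
    by (rule exI[of _ "v @ [a]"], rule exI[of _ f]) (use read vf p ra rw_Ysuf[OF h(1,2)] in auto)
next
  case (eps q Z p \<alpha> rest \<gamma>)
  from I eps obtain v f where vf: "w = v @ rest" "freely_reduced f" "fst ` set f \<subseteq> B0" "Z # \<gamma> = stk (rev f)"
    "case q of Inl (t, b) \<Rightarrow> t = rep (word_eval G v) \<and> ev f = word_eval G v \<otimes> inv t \<and> b = (word_eval G v \<in> H)
      | Inr (t, ys) \<Rightarrow> ys \<in> Ysuf \<and> t = rep (word_eval G v) \<and> ev f \<otimes> ev ys = word_eval G v \<otimes> inv t"
    unfolding Inv_def by auto
  have d: "delta0 q None Z = Some (p, \<alpha>)" using eps by (simp add: Mdp_def)
  obtain t ys where q: "q = Inr (t, ys)" using d by (cases q) auto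
  have vc: "set v \<subseteq> carrier G" using w vf(1) A_sub by auto
  have fc: "fst ` set f \<subseteq> carrier G" using f_carr[OF vf(3)] .
  have tv: "t = rep (word_eval G v)" and ys: "ys \<in> Ysuf" and ev: "ev f \<otimes> ev ys = word_eval G v \<otimes> inv t"
    using vf(5) q by auto
  have Z: "Z = hd (stk (rev f))" "\<gamma> = tl (stk (rev f))" using vf(4) by (metis list.sel)+
  show ?thesis
  proof (cases ys)
    case Nil
    then have p: "p = Inl (t, acc t (topq Z))" "\<alpha> = [Z]" using d q by (auto split: if_splits)
    have ev': "ev f = word_eval G v \<otimes> inv t" using ev Nil fc by simp
    have "acc t (topq Z) = (word_eval G v \<in> H)"
      using acc_step[OF vc vf(2,3) tv ev'] Z stk_topq[of "rev f"] by simp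
    then show ?thesis unfolding Inv_def
      by (rule_tac exI[of _ v], rule_tac exI[of _ f]) (use eps vf p tv ev' in auto)
  next
    case (Cons y ys')
    then have p: "p = Inr (t, ys')" "\<alpha> = newstk y Z" using d q by (auto split: if_splits)
    have yy: "ys' \<in> Ysuf" "fst y \<in> B0" using Ysuf_Cons ys Cons by auto
    have ysc: "fst ` set ys' \<subseteq> carrier G" using Ysuf_B0[OF yy(1)] B0_carr by blast
    have yc: "fst y \<in> carrier G" using yy B0_carr by blast
    define f' where "f' = push f y"
    have "fst ` set (push f y) \<subseteq> fst ` (set f \<union> {y})" using set_push by (rule image_mono)
    also have "\<dots> \<subseteq> B0" using vf(3) yy(2) by auto
    finally have f': "freely_reduced f'" "fst ` set f' \<subseteq> B0" using fr_push[OF vf(2)] by (auto simp: f'_def)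
    have stk': "\<alpha> @ \<gamma> = stk (rev f')" using stk_push[of y f] Z p by (simp add: f'_def)
    have "ev f' \<otimes> ev ys' = ev f \<otimes> ev [y] \<otimes> ev ys'" using ev_push fc yc by (simp add: f'_def)
    also have "\<dots> = ev f \<otimes> ev ys" using Cons fc yc ysc ev_append[of "[y]" ys'] by (simp add: m_assoc)
    finally have ev'': "ev f' \<otimes> ev ys' = word_eval G v \<otimes> inv t" using ev by simp
    show ?thesis unfolding Inv_def
      by (rule_tac exI[of _ v], rule_tac exI[of _ f']) (use eps vf p tv ev'' f' stk' yy in auto)
  qed
qed

lemma Inv_reach: assumes w: "set w \<subseteq> A" and r: "(dpda_step Mdp)\<^sup>*\<^sup>* (Inl (\<one>, True), w, [None]) c"
  shows "Inv w c"
  using r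
proof (induction rule: rtranclp_induct)
  case base
  have "Inv w (Inl (\<one>, True), w, [None])" unfolding Inv_def
    by (rule exI[of _ "[]"], rule exI[of _ "[]"]) (simp add: word_eval_def rep_one H_one)
  then show ?case .
next
  case (step c c') then show ?case using Inv_step w by blast
qed


lemma stk_ne: "stk r \<noteq> []" by (cases r) auto

lemma hd_stk_Gam: "fst ` set f \<subseteq> B0 \<Longrightarrow> hd (stk (rev f)) \<in> Gam"
proof -
  assume "fst ` set f \<subseteq> B0"
  then have "set (stk (rev f)) \<subseteq> Gam" by (intro stk_Gam) simp
  moreover have "hd (stk (rev f)) \<in> set (stk (rev f))" by (rule hd_in_set[OF stk_ne])
  ultimately show ?thesis by (rule subsetD)
qed

lemma proc_run: "t \<in> T \<Longrightarrow> ys \<in> Ysuf \<Longrightarrow> freely_reduced f \<Longrightarrow> fst ` set f \<subseteq> B0 \<Longrightarrow>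
  (dpda_step Mdp)\<^sup>*\<^sup>* (Inr (t, ys), rest, stk (rev f)) (Inr (t, []), rest, stk (rev (foldl push f ys)))"
proof (induction ys arbitrary: f)
  case Nil then show ?case by simp
next
  case (Cons y ys)
  define Z where "Z = hd (stk (rev f))"
  have ZG: "Z \<in> Gam" using hd_stk_Gam[OF Cons.prems(4)] Z_def by simp
  have yy: "ys \<in> Ysuf" "fst y \<in> B0" using Ysuf_Cons[OF Cons.prems(2)] by auto
  have d: "delta Mdp (Inr (t, y # ys)) None Z = Some (Inr (t, ys), newstk y Z)"
    using Cons.prems(1,2) ZG by (simp add: Mdp_def)
  have "dpda_step Mdp (Inr (t, y # ys), rest, Z # tl (stk (rev f))) (Inr (t, ys), rest, newstk y Z @ tl (stk (rev f)))"
    using d by (rule dpda_step.eps)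
  then have s1: "dpda_step Mdp (Inr (t, y # ys), rest, stk (rev f)) (Inr (t, ys), rest, stk (rev (push f y)))"
    using stk_nonempty[of "rev f"] stk_push[of y f] Z_def by simp
  have "fst ` set (push f y) \<subseteq> fst ` (set f \<union> {y})" using set_push by (rule image_mono)
  also have "\<dots> \<subseteq> B0" using Cons.prems(4) yy(2) by auto
  finally have "fst ` set (push f y) \<subseteq> B0" .
  then have "(dpda_step Mdp)\<^sup>*\<^sup>* (Inr (t, ys), rest, stk (rev (push f y))) (Inr (t, []), rest, stk (rev (foldl push (push f y) ys)))"
    using Cons.IH[OF Cons.prems(1) yy(1) fr_push[OF Cons.prems(3)]] by blast
  then show ?case using s1 by (simp add: converse_rtranclp_into_rtranclp)
qed

lemma fwd: "set v \<subseteq> A \<Longrightarrow> \<exists>f. freely_reduced f \<and> fst ` set f \<subseteq> B0 \<and>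
   ev f = word_eval G v \<otimes> inv (rep (word_eval G v)) \<and>
   (dpda_step Mdp)\<^sup>*\<^sup>* (Inl (\<one>, True), v @ rest, [None]) (Inl (rep (word_eval G v), word_eval G v \<in> H), rest, stk (rev f))"
proof (induction v arbitrary: rest rule: rev_induct)
  case Nil
  show ?case by (rule exI[of _ "[]"]) (simp add: word_eval_def rep_one H_one)
next
  case (snoc x v)
  have vA: "set v \<subseteq> A" and xA: "x \<in> A" using snoc.prems by auto
  have vc: "set v \<subseteq> carrier G" and xc: "x \<in> carrier G" using vA xA A_sub by auto
  obtain f where f: "freely_reduced f" "fst ` set f \<subseteq> B0" "ev f = word_eval G v \<otimes> inv (rep (word_eval G v))"
    and r1: "(dpda_step Mdp)\<^sup>*\<^sup>* (Inl (\<one>, True), v @ x # rest, [None]) (Inl (rep (word_eval G v), word_eval G v \<in> H), x # rest, stk (rev f))"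
    using snoc.IH[OF vA, of "x # rest"] by blast
  define t where "t = rep (word_eval G v)"
  have tT: "t \<in> T" and tc: "t \<in> carrier G" using rep_T rep_carrier word_eval_carr[OF vc] t_def by auto
  define Z where "Z = hd (stk (rev f))"
  have ZG: "Z \<in> Gam" using hd_stk_Gam[OF f(2)] Z_def by simp
  define t' where "t' = rep (t \<otimes> x)"
  define u where "u = rw (mm t x)"
  have d: "delta Mdp (Inl (t, word_eval G v \<in> H)) (Some x) Z = Some (Inr (t', u), [Z])"
    using tT xA ZG by (simp add: Mdp_def t'_def u_def)
  have "dpda_step Mdp (Inl (t, word_eval G v \<in> H), x # rest, Z # tl (stk (rev f))) (Inr (t', u), rest, [Z] @ tl (stk (rev f)))"
    using d by (rule dpda_step.read)
  then have s2: "dpda_step Mdp (Inl (t, word_eval G v \<in> H), x # rest, stk (rev f)) (Inr (t', u), rest, stk (rev f))"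
    using stk_nonempty[of "rev f"] Z_def by simp
  have t'T: "t' \<in> T" using rep_T tc xc t'_def by simp
  have uY: "u \<in> Ysuf" using rw_Ysuf[OF tT xA] u_def by simp
  define f' where "f' = foldl push f u"
  have s3: "(dpda_step Mdp)\<^sup>*\<^sup>* (Inr (t', u), rest, stk (rev f)) (Inr (t', []), rest, stk (rev f'))"
    using proc_run[OF t'T uY f(1,2)] f'_def by simp
  have f': "freely_reduced f'" "fst ` set f' \<subseteq> B0"
    using fr_foldl_push[OF f(1)] letters_foldl_push[OF f(2) Ysuf_B0[OF uY]] f'_def by auto
  note ra = read_alg[OF vc xc f(2) t_def f(3)[folded t_def]]
  have fc: "fst ` set f \<subseteq> carrier G" and uc: "fst ` set u \<subseteq> carrier G"
    using f_carr f(2) Ysuf_B0[OF uY] by auto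
  have evf': "ev f' = word_eval G (v @ [x]) \<otimes> inv t'"
    using ra(2) ev_foldl_push[OF fc uc] f'_def u_def t'_def by simp
  have t'v: "t' = rep (word_eval G (v @ [x]))" using ra(1) t'_def by simp
  have vxc: "set (v @ [x]) \<subseteq> carrier G" using vc xc by simp
  have acc: "acc t' (runa f') = (word_eval G (v @ [x]) \<in> H)" by (rule acc_step[OF vxc f' t'v evf'])
  define Z' where "Z' = hd (stk (rev f'))"
  have Z'G: "Z' \<in> Gam" using hd_stk_Gam[OF f'(2)] Z'_def by simp
  have d4: "delta Mdp (Inr (t', [])) None Z' = Some (Inl (t', acc t' (topq Z')), [Z'])"
    using t'T Z'G by (simp add: Mdp_def)
  have "dpda_step Mdp (Inr (t', []), rest, Z' # tl (stk (rev f'))) (Inl (t', acc t' (topq Z')), rest, [Z'] @ tl (stk (rev f')))"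
    using d4 by (rule dpda_step.eps)
  then have s4: "dpda_step Mdp (Inr (t', []), rest, stk (rev f')) (Inl (t', word_eval G (v @ [x]) \<in> H), rest, stk (rev f'))"
    using stk_nonempty[of "rev f'"] Z'_def stk_topq[of "rev f'"] acc by simp
  have "(dpda_step Mdp)\<^sup>*\<^sup>* (Inl (\<one>, True), (v @ [x]) @ rest, [None]) (Inl (t', word_eval G (v @ [x]) \<in> H), rest, stk (rev f'))"
  proof -
    have e: "(v @ [x]) @ rest = v @ x # rest" by simp
    have "(dpda_step Mdp)\<^sup>*\<^sup>* (Inl (\<one>, True), v @ x # rest, [None]) (Inr (t', u), rest, stk (rev f))"
      using r1[folded t_def] s2 by (rule rtranclp.rtrancl_into_rtrancl)
    then have "(dpda_step Mdp)\<^sup>*\<^sup>* (Inl (\<one>, True), v @ x # rest, [None]) (Inr (t', []), rest, stk (rev f'))"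
      using s3 by (rule rtranclp_trans)
    then have "(dpda_step Mdp)\<^sup>*\<^sup>* (Inl (\<one>, True), v @ x # rest, [None]) (Inl (t', word_eval G (v @ [x]) \<in> H), rest, stk (rev f'))"
      using s4 by (rule rtranclp.rtrancl_into_rtrancl)
    then show ?thesis unfolding e .
  qed
  then show ?case using f' evf' t'v by auto
qed

lemma Mdp_simps: "sigma Mdp = A" "init Mdp = Inl (\<one>, True)" "init_stack Mdp = None"
  "final Mdp = Inl ` (T \<times> {True})" by (simp_all add: Mdp_def)

lemma Mdp_lang: "dpda_lang Mdp = GWP G H A"
proof (intro equalityI subsetI)
  fix w assume "w \<in> dpda_lang Mdp"
  then obtain p \<gamma> where w: "set w \<subseteq> A" "(dpda_step Mdp)\<^sup>*\<^sup>* (Inl (\<one>, True), w, [None]) (p, [], \<gamma>)" "p \<in> Inl ` (T \<times> {True})"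
    unfolding dpda_lang_def Mdp_simps by blast
  obtain t where p: "p = Inl (t, True)" using w(3) by blast
  have "Inv w (p, [], \<gamma>)" using Inv_reach[OF w(1) w(2)] .
  then obtain v where "w = v" "True = (word_eval G v \<in> H)" unfolding Inv_def p by auto
  then show "w \<in> GWP G H A" using w(1) by (simp add: GWP_def)
next
  fix w assume "w \<in> GWP G H A"
  then have w: "set w \<subseteq> A" "word_eval G w \<in> H" by (auto simp: GWP_def)
  obtain f where "(dpda_step Mdp)\<^sup>*\<^sup>* (Inl (\<one>, True), w @ [], [None]) (Inl (rep (word_eval G w), word_eval G w \<in> H), [], stk (rev f))"
    using fwd[OF w(1), of "[]"] by blast
  then have r: "(dpda_step Mdp)\<^sup>*\<^sup>* (Inl (\<one>, True), w, [None]) (Inl (rep (word_eval G w), True), [], stk (rev f))"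
    using w(2) by simp
  have "rep (word_eval G w) \<in> T" using rep_T word_eval_carr w(1) A_sub by auto
  then have fin: "Inl (rep (word_eval G w), True) \<in> Inl ` (T \<times> {True})" by blast
  show "w \<in> dpda_lang Mdp" unfolding dpda_lang_def Mdp_simps mem_Collect_eq
  proof (intro conjI)
    show "set w \<subseteq> A" by (rule w(1))
    show "\<exists>p \<gamma>. (dpda_step Mdp)\<^sup>*\<^sup>* (Inl (\<one>, True), w, [None]) (p, [], \<gamma>) \<and> p \<in> Inl ` (T \<times> {True})"
      by (rule exI[of _ "Inl (rep (word_eval G w), True)"], rule exI[of _ "stk (rev f)"]) (rule conjI[OF r fin])
  qed
qed

lemma main: "det_context_free A (GWP G H A)"
proof -
  obtain M' :: "(nat, 'a, nat) dpda" where "dpda_wf M'" "sigma M' = sigma Mdp" "dpda_lang M' = dpda_lang Mdp"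
    using dpda_nat[OF Mdp_wf] by blast
  then have "det_context_free (sigma Mdp) (dpda_lang Mdp)" unfolding det_context_free_def by blast
  then show ?thesis using Mdp_lang Mdp_simps(1) by simp
qed

end

lemma (in group) signed_eval_sub:
  assumes "subgroup F G" shows "fst ` set w \<subseteq> F \<Longrightarrow> signed_eval (G\<lparr>carrier := F\<rparr>) w = signed_eval G w"
proof (induction w)
  case Nil then show ?case by (simp add: signed_eval_def)
next
  case (Cons y w)
  obtain b s where y: "y = (b, s)" by (cases y)
  have b: "b \<in> F" using Cons.prems y by auto
  have "signed_eval (G\<lparr>carrier := F\<rparr>) (y # w) = (if s then b else inv\<^bsub>G\<lparr>carrier := F\<rparr>\<^esub> b) \<otimes> signed_eval (G\<lparr>carrier := F\<rparr>) w"
    using y by (simp add: signed_eval_def)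
  also have "\<dots> = (if s then b else inv b) \<otimes> signed_eval G w" using Cons b assms by simp
  also have "\<dots> = signed_eval G (y # w)" using y by (simp add: signed_eval_def)
  finally show ?case .
qed

theorem theorem1p3:
  fixes G :: "('g, 'b) monoid_scheme" and A H :: "'g set"
  assumes "group G"
    and "virtually_free G"
    and "finite A" and "A \<subseteq> carrier G"
    and "\<forall>x\<in>A. inv\<^bsub>G\<^esub> x \<in> A"
    and "generate G A = carrier G"
    and "fin_gen_subgroup G H"
  shows "det_context_free A (GWP G H A)"
proof -
  interpret group G by (rule assms(1))
  obtain F where F: "subgroup F G" "finite (rcosets\<^bsub>G\<^esub> F)" "free_group (G\<lparr>carrier := F\<rparr>)"
    using assms(2) unfolding virtually_free_def by blast
  obtain B where B: "free_basis (G\<lparr>carrier := F\<rparr>) B" using F(3) unfolding free_group_def by blast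
  have B1: "B \<subseteq> F" and B2: "generate (G\<lparr>carrier := F\<rparr>) B = F"
    and B3: "\<And>w. w \<noteq> [] \<Longrightarrow> set (map fst w) \<subseteq> B \<Longrightarrow> freely_reduced w \<Longrightarrow>
       signed_eval (G\<lparr>carrier := F\<rparr>) w \<noteq> \<one>\<^bsub>G\<lparr>carrier := F\<rparr>\<^esub>"
    using B unfolding free_basis_def by auto
  have B3': "signed_eval G w \<noteq> \<one>\<^bsub>G\<^esub>" if "w \<noteq> []" "fst ` set w \<subseteq> B" "freely_reduced w" for w
  proof -
    have "fst ` set w \<subseteq> F" using that(2) B1 by (rule subset_trans)
    then have "signed_eval (G\<lparr>carrier := F\<rparr>) w = signed_eval G w" by (rule signed_eval_sub[OF F(1)])
    then show ?thesis using B3[of w] that by simp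
  qed
  obtain S where S: "subgroup H G" "finite S" "S \<subseteq> H" "generate G S = H"
    using assms(7) unfolding fin_gen_subgroup_def by blast
  have "gwp G A H F B S"
    by (rule gwp.intro[OF assms(1) gwp_axioms.intro[OF assms(3) assms(4) F(1) F(2) B1 B2 B3' S(1) S(2) S(4)]])
  then interpret gwp G A H F B S .
  show ?thesis by (rule main)
qed


end
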